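(* Let $N, J \ge 1$ be integers and let $F_1,\dots,F_J:\mathbb{R}_+^N\to\mathbb{R}_+$ be upper semicontinuous, concave functions that are homogeneous of degree 1. Define $F:\mathbb{R}_+^N\to\mathbb{R}_+$ by $$F(x)=\max\Big\{\sum_{j=1}^J F_j(x_j): x_j\in\mathbb{R}_+^N \text{ for all } j,\ \sum_{j=1}^J x_j=x\Big\}.$$ Let $\Delta=\{x\in\mathbb{R}_+^N:\sum_{n=1}^N x_n=1\}$. Then $$\operatorname{hyp} F|_\Delta=\operatorname{co}\Big(\bigcup_{j=1}^J \operatorname{hyp} F_j|_\Delta\Big).$$
   Context: For a function $f:D\to\mathbb{R}$, its hypograph is $\operatorname{hyp} f=\{(x,y)\in D\times\mathbb{R}: y\le f(x)\}$; $f|_\Delta$ denotes the restriction to $\Delta$, and $\operatorname{co}A$ denotes the convex hull of a set $A$. Homogeneous of degree 1 means $F_j(\lambda x)=\lambda F_j(x)$ for all $\lambda\ge0$. *)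

theory Defs
  imports "HOL-Analysis.Analysis"
begin

definition orthant :: "(real ^ 'n) set" where
  "orthant = {x. \<forall>i. 0 \<le> x $ i}"

definition simplex_Delta :: "(real ^ 'n) set" where
  "simplex_Delta = {x \<in> orthant. (\<Sum>i\<in>UNIV. x $ i) = 1}"

definition usc_on :: "'a::topological_space set \<Rightarrow> ('a \<Rightarrow> real) \<Rightarrow> bool" where
  "usc_on S f \<longleftrightarrow> (\<forall>x\<in>S. \<forall>a. f x < a \<longrightarrow> (\<forall>\<^sub>F y in at x within S. f y < a))"

definition hyp_on :: "'a set \<Rightarrow> ('a \<Rightarrow> real) \<Rightarrow> ('a \<times> real) set" where
  "hyp_on D f = {(x, y). x \<in> D \<and> y \<le> f x}"

text \<open>The sup-convolution F(x) = max { sum_j F_j(x_j) : x_j in orthant, sum_j x_j = x }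
  (the maximum exists under the hypotheses; we write it as the supremum).\<close>
definition supconv :: "nat \<Rightarrow> (nat \<Rightarrow> real ^ 'n \<Rightarrow> real) \<Rightarrow> real ^ 'n \<Rightarrow> real" where
  "supconv J Fs x = Sup {(\<Sum>j<J. Fs j (xs j)) | xs.
       (\<forall>j<J. xs j \<in> orthant) \<and> (\<Sum>j<J. xs j) = x}"

end

theory Submission
  imports Defs "HOL-Library.Product_Plus"
begin

lemma usc_max:
  fixes f :: "'a::topological_space \<Rightarrow> real"
  assumes "compact K" "K \<noteq> {}"
    and nb: "\<And>x a. x \<in> K \<Longrightarrow> f x < a \<Longrightarrow> \<exists>U. open U \<and> x \<in> U \<and> (\<forall>y\<in>U \<inter> K. f y < a)"
  shows "\<exists>x\<in>K. \<forall>y\<in>K. f y \<le> f x"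
proof (rule ccontr)
  assume "\<not> ?thesis"
  then have "\<forall>x\<in>K. \<exists>y\<in>K. f x < f y" by (auto simp: not_le)
  then obtain g where g: "\<And>x. x \<in> K \<Longrightarrow> g x \<in> K \<and> f x < f (g x)" by metis
  have "\<forall>x\<in>K. \<exists>U. open U \<and> x \<in> U \<and> (\<forall>y\<in>U \<inter> K. f y < f (g x))"
    using nb g by blast
  then obtain U where U: "\<And>x. x \<in> K \<Longrightarrow> open (U x) \<and> x \<in> U x \<and> (\<forall>y\<in>U x \<inter> K. f y < f (g x))"
    by metis
  have cov: "K \<subseteq> (\<Union>c\<in>K. U c)" using U by blast
  obtain C where C: "C \<subseteq> K" "finite C" "K \<subseteq> (\<Union>c\<in>C. U c)"
    using compactE_image[OF assms(1) _ cov] U by blast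
  have "C \<noteq> {}" using C assms(2) by auto
  obtain c where c: "c \<in> C" "f (g c) = Max ((\<lambda>d. f (g d)) ` C)"
    by (metis (no_types, lifting) Max_in \<open>C \<noteq> {}\<close> C(2) finite_imageI imageE image_is_empty)
  have le: "\<And>d. d \<in> C \<Longrightarrow> f (g d) \<le> f (g c)"
    using c C(2) by simp
  have "g c \<in> K" using g c C by blast
  then obtain d where d: "d \<in> C" "g c \<in> U d" using C by blast
  have "f (g c) < f (g d)" using U[of d] d C \<open>g c \<in> K\<close> by blast
  with le[OF d(1)] show False by simp
qed

lemma compact_PiE_UNIV:
  fixes S :: "'i \<Rightarrow> ('b::topological_space) set"
  assumes "\<And>i. compact (S i)"
  shows "compact (PiE UNIV S)"
proof -
  have "compactin (product_topology (\<lambda>i. euclidean) UNIV) (PiE UNIV S)"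
    using assms by (simp add: compactin_PiE)
  then show ?thesis by (simp add: euclidean_product_topology)
qed


lemma usc_nb:
  assumes "usc_on S f" "x \<in> S" "f x < a"
  shows "\<exists>T. open T \<and> x \<in> T \<and> (\<forall>y\<in>T \<inter> S. f y < a)"
proof -
  have "\<forall>\<^sub>F y in at x within S. f y < a" using assms unfolding usc_on_def by blast
  then obtain T where "open T" "x \<in> T" "\<forall>y\<in>T. y \<in> S \<longrightarrow> y \<noteq> x \<longrightarrow> f y < a"
    unfolding eventually_at_topological by blast
  then show ?thesis using assms(3) by blast
qed

lemma exists_max:
  fixes J :: nat and Fs :: "nat \<Rightarrow> real ^ 'n \<Rightarrow> real" and x :: "real ^ 'n"
  assumes J: "J \<ge> 1"
    and usc: "\<And>j. j < J \<Longrightarrow> usc_on orthant (Fs j)"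
    and x: "x \<in> orthant"
  shows "\<exists>xs. (\<forall>j<J. xs j \<in> orthant) \<and> (\<Sum>j<J. xs j) = x \<and>
     (\<forall>ys. (\<forall>j<J. ys j \<in> orthant) \<and> (\<Sum>j<J. ys j) = x \<longrightarrow>
        (\<Sum>j<J. Fs j (ys j)) \<le> (\<Sum>j<J. Fs j (xs j)))"
proof -
  define S where "S j = (if j < J then cbox 0 x else {0::real^'n})" for j
  define K where "K = PiE UNIV S \<inter> {xs. (\<Sum>j<J. xs j) = x}"
  define Phi where "Phi xs = (\<Sum>j<J. Fs j (xs j))" for xs :: "nat \<Rightarrow> real^'n"
  have cS: "compact (S j)" for j by (simp add: S_def)
  have cl: "closed {xs :: nat \<Rightarrow> real^'n. (\<Sum>j<J. xs j) = x}"
    by (rule closed_Collect_eq) (auto intro!: continuous_on_sum)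
  have cK: "compact K" unfolding K_def
    using compact_PiE_UNIV[of S, OF cS] cl by blast
  have orth_iff: "y \<in> cbox 0 x \<longleftrightarrow> y \<in> orthant \<and> (\<forall>i. y $ i \<le> x $ i)" for y
    by (auto simp: mem_box_cart orthant_def)
  have K_orth: "xs \<in> K \<Longrightarrow> j < J \<Longrightarrow> xs j \<in> orthant" for xs j
  proof -
    assume a: "xs \<in> K" "j < J"
    then have "xs j \<in> S j" by (auto simp: K_def PiE_iff)
    then show "xs j \<in> orthant" using a(2) orth_iff by (simp add: S_def)
  qed
  define e0 where "e0 j = (if j = 0 then x else 0)" for j :: nat
  have x0: "x \<in> cbox 0 x" using x by (simp add: orth_iff)
  have zx: "0 \<in> cbox 0 x" using x by (simp add: mem_box_cart orthant_def)
  have "e0 \<in> K" using J x0 zx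
    by (auto simp: K_def PiE_iff S_def e0_def sum.delta)
  then have Kne: "K \<noteq> {}" by blast
  have nb: "\<exists>U. open U \<and> xs \<in> U \<and> (\<forall>y\<in>U \<inter> K. Phi y < a)" if xs: "xs \<in> K" and lt: "Phi xs < a" for xs a
  proof -
    define d where "d = (a - Phi xs) / real J"
    have d: "d > 0" using lt J unfolding d_def by simp
    have "\<forall>j\<in>{..<J}. \<exists>T. open T \<and> xs j \<in> T \<and> (\<forall>y\<in>T \<inter> orthant. Fs j y < Fs j (xs j) + d)"
      using usc_nb[OF usc K_orth[OF xs]] d by auto
    then obtain T where T: "\<And>j. j < J \<Longrightarrow> open (T j) \<and> xs j \<in> T j \<and> (\<forall>y\<in>T j \<inter> orthant. Fs j y < Fs j (xs j) + d)"
      by (metis lessThan_iff)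
    define U where "U = {ys. \<forall>j\<in>{..<J}. ys (id j) \<in> T j}"
    have "open U" unfolding U_def by (rule product_topology_basis') (use T in auto)
    moreover have "xs \<in> U" using T by (simp add: U_def)
    moreover have "Phi y < a" if "y \<in> U \<inter> K" for y
    proof -
      have "Phi y < (\<Sum>j<J. Fs j (xs j) + d)" unfolding Phi_def
        apply (rule sum_strict_mono)
        using J T that K_orth[of y] by (auto simp: U_def lessThan_empty_iff)
      also have "\<dots> = a" using J by (simp add: sum.distrib d_def Phi_def)
      finally show ?thesis .
    qed
    ultimately show ?thesis by blast
  qed
  obtain xs where xs: "xs \<in> K" "\<And>y. y \<in> K \<Longrightarrow> Phi y \<le> Phi xs"
    using usc_max[OF cK Kne nb] by blast
  show ?thesis
  proof (rule exI[of _ xs], intro conjI)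
    show "\<forall>j<J. xs j \<in> orthant" using K_orth xs by blast
    show "(\<Sum>j<J. xs j) = x" using xs by (simp add: K_def)
    show "\<forall>ys. (\<forall>j<J. ys j \<in> orthant) \<and> (\<Sum>j<J. ys j) = x \<longrightarrow>
        (\<Sum>j<J. Fs j (ys j)) \<le> (\<Sum>j<J. Fs j (xs j))"
    proof (intro allI impI)
    fix ys assume ys: "(\<forall>j<J. ys j \<in> orthant) \<and> (\<Sum>j<J. ys j) = x"
    define ys' where "ys' j = (if j < J then ys j else 0)" for j
    have "ys j $ i \<le> x $ i" if "j < J" for j i
    proof -
      have "x $ i = (\<Sum>k<J. ys k $ i)" using ys by auto
      also have "\<dots> \<ge> ys j $ i"
        by (rule member_le_sum) (use ys that in \<open>auto simp: orthant_def\<close>)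
      finally show ?thesis .
    qed
    then have "ys' \<in> K" using ys zx
      by (auto simp: K_def PiE_iff S_def ys'_def orth_iff)
    then have "Phi ys' \<le> Phi xs" by (rule xs(2))
    moreover have "Phi ys' = Phi ys" by (simp add: Phi_def ys'_def)
    ultimately show "(\<Sum>j<J. Fs j (ys j)) \<le> (\<Sum>j<J. Fs j (xs j))" by (simp add: Phi_def)
  qed
  qed
qed


theorem theorem3:
  fixes J :: nat and Fs :: "nat \<Rightarrow> real ^ 'n \<Rightarrow> real"
  assumes "J \<ge> 1"
    and "\<And>j x. j < J \<Longrightarrow> x \<in> orthant \<Longrightarrow> 0 \<le> Fs j x"
    and "\<And>j. j < J \<Longrightarrow> usc_on orthant (Fs j)"
    and "\<And>j. j < J \<Longrightarrow> concave_on orthant (Fs j)"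
    and "\<And>j l x. j < J \<Longrightarrow> x \<in> orthant \<Longrightarrow> l \<ge> 0 \<Longrightarrow> Fs j (l *\<^sub>R x) = l * Fs j x"
  shows "hyp_on simplex_Delta (supconv J Fs)
           = convex hull (\<Union>j<J. hyp_on simplex_Delta (Fs j))"
proof -
  define F where "F = supconv J Fs"
  have orth0: "(0::real^'n) \<in> orthant" by (simp add: orthant_def)
  have F0: "Fs j 0 = 0" if "j < J" for j
    using assms(5)[OF that orth0, of 0] by simp
  have supmax: "\<exists>xs. (\<forall>j<J. xs j \<in> orthant) \<and> (\<Sum>j<J. xs j) = x \<and> F x = (\<Sum>j<J. Fs j (xs j)) \<and>
     (\<forall>ys. (\<forall>j<J. ys j \<in> orthant) \<and> (\<Sum>j<J. ys j) = x \<longrightarrow> (\<Sum>j<J. Fs j (ys j)) \<le> F x)"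
    if x: "x \<in> orthant" for x
  proof -
    obtain xs where xs: "\<forall>j<J. xs j \<in> orthant" "(\<Sum>j<J. xs j) = x"
      "\<forall>ys. (\<forall>j<J. ys j \<in> orthant) \<and> (\<Sum>j<J. ys j) = x \<longrightarrow>
        (\<Sum>j<J. Fs j (ys j)) \<le> (\<Sum>j<J. Fs j (xs j))"
      using exists_max[of J Fs, OF assms(1) assms(3) x] by blast
    have "F x = (\<Sum>j<J. Fs j (xs j))" unfolding F_def supconv_def
      by (rule cSup_eq_maximum) (use xs in auto)
    then show ?thesis using xs by auto
  qed
  have ge: "Fs j x \<le> F x" if j: "j < J" and x: "x \<in> orthant" for j x
  proof -
    define ys where "ys k = (if k = j then x else 0)" for k
    have "(\<Sum>k<J. Fs k (ys k)) = (\<Sum>k<J. if k = j then Fs j x else 0)"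
      by (rule sum.cong) (auto simp: ys_def F0)
    also have "\<dots> = Fs j x" using j by simp
    finally have e: "(\<Sum>k<J. Fs k (ys k)) = Fs j x" .
    have "(\<forall>k<J. ys k \<in> orthant) \<and> (\<Sum>k<J. ys k) = x"
      using x j orth0 by (auto simp: ys_def)
    then show ?thesis using supmax[OF x] e by metis
  qed
  have Dorth: "simplex_Delta \<subseteq> orthant" by (auto simp: simplex_Delta_def)
  have convD: "convex (simplex_Delta :: (real^'n) set)"
    unfolding convex_def simplex_Delta_def orthant_def
    by (auto simp: sum.distrib simp flip: sum_distrib_left)
  have conc: "u * F x + v * F x' \<le> F (u *\<^sub>R x + v *\<^sub>R x')"
    if x: "x \<in> orthant" and x': "x' \<in> orthant" and u: "u \<ge> 0" and v: "v \<ge> 0" and uv: "u + v = 1"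
    for x x' u v
  proof -
    obtain xs where xs: "\<forall>j<J. xs j \<in> orthant" "(\<Sum>j<J. xs j) = x" "F x = (\<Sum>j<J. Fs j (xs j))"
      using supmax[OF x] by blast
    obtain xs' where xs': "\<forall>j<J. xs' j \<in> orthant" "(\<Sum>j<J. xs' j) = x'" "F x' = (\<Sum>j<J. Fs j (xs' j))"
      using supmax[OF x'] by blast
    have cvo: "convex (orthant :: (real^'n) set)"
      unfolding convex_def orthant_def by auto
    have xo: "u *\<^sub>R x + v *\<^sub>R x' \<in> orthant" using cvo x x' u v uv unfolding convex_def by blast
    define zs where "zs j = u *\<^sub>R xs j + v *\<^sub>R xs' j" for j
    have zo: "\<forall>j<J. zs j \<in> orthant" using cvo xs xs' u v uv unfolding convex_def zs_def by blast
    have zs: "(\<Sum>j<J. zs j) = u *\<^sub>R x + v *\<^sub>R x'"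
      using xs xs' by (simp add: zs_def sum.distrib flip: scaleR_sum_right)
    have "u * F x + v * F x' = (\<Sum>j<J. u * Fs j (xs j) + v * Fs j (xs' j))"
      using xs xs' by (simp add: sum.distrib sum_distrib_left)
    also have "\<dots> \<le> (\<Sum>j<J. Fs j (zs j))"
    proof (rule sum_mono)
      fix j assume "j \<in> {..<J}"
      then have j: "j < J" by simp
      show "u * Fs j (xs j) + v * Fs j (xs' j) \<le> Fs j (zs j)"
        using assms(4)[OF j] xs(1) xs'(1) j u v uv unfolding concave_on_iff zs_def by blast
    qed
    also have "\<dots> \<le> F (u *\<^sub>R x + v *\<^sub>R x')"
      using supmax[OF xo] zo zs by blast
    finally show ?thesis .
  qed
  have convH: "convex (hyp_on simplex_Delta F)"
    unfolding convex_def
  proof (intro ballI allI impI)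
    fix p q :: "(real^'n) \<times> real" and u v :: real
    assume p: "p \<in> hyp_on simplex_Delta F" and q: "q \<in> hyp_on simplex_Delta F"
      and u: "0 \<le> u" and v: "0 \<le> v" and uv: "u + v = 1"
    obtain x y where pxy: "p = (x, y)" by force
    obtain x' y' where qxy: "q = (x', y')" by force
    have x: "x \<in> simplex_Delta" "y \<le> F x" using p pxy by (auto simp: hyp_on_def)
    have x': "x' \<in> simplex_Delta" "y' \<le> F x'" using q qxy by (auto simp: hyp_on_def)
    have "u *\<^sub>R x + v *\<^sub>R x' \<in> simplex_Delta" using convD x x' u v uv unfolding convex_def by blast
    moreover have "u * y + v * y' \<le> F (u *\<^sub>R x + v *\<^sub>R x')"
    proof -
      have "u * y + v * y' \<le> u * F x + v * F x'"
        using x x' u v by (simp add: add_mono mult_left_mono)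
      also have "\<dots> \<le> F (u *\<^sub>R x + v *\<^sub>R x')"
        using conc x x' Dorth u v uv by blast
      finally show ?thesis .
    qed
    ultimately show "u *\<^sub>R p + v *\<^sub>R q \<in> hyp_on simplex_Delta F"
      by (simp add: pxy qxy hyp_on_def)
  qed
  have sub1: "(\<Union>j<J. hyp_on simplex_Delta (Fs j)) \<subseteq> hyp_on simplex_Delta F"
  proof
    fix p assume "p \<in> (\<Union>j<J. hyp_on simplex_Delta (Fs j))"
    then obtain j x y where "j < J" "p = (x, y)" "x \<in> simplex_Delta" "y \<le> Fs j x"
      by (auto simp: hyp_on_def)
    then show "p \<in> hyp_on simplex_Delta F"
      using ge[of j x] Dorth by (auto simp: hyp_on_def)
  qed
  have sub2: "hyp_on simplex_Delta F \<subseteq> convex hull (\<Union>j<J. hyp_on simplex_Delta (Fs j))"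
  proof
    fix p assume p: "p \<in> hyp_on simplex_Delta F"
    obtain x y where pxy: "p = (x, y)" by force
    have x: "x \<in> simplex_Delta" "y \<le> F x" using p pxy by (auto simp: hyp_on_def)
    then have xo: "x \<in> orthant" using Dorth by blast
    obtain xs where xs: "\<forall>j<J. xs j \<in> orthant" "(\<Sum>j<J. xs j) = x" "F x = (\<Sum>j<J. Fs j (xs j))"
      using supmax[OF xo] by blast
    define t where "t j = (\<Sum>i\<in>UNIV. xs j $ i)" for j
    define P where "P = {j. j < J \<and> t j > 0}"
    define c where "c = F x - y"
    have c: "c \<ge> 0" using x by (simp add: c_def)
    have tnn: "t j \<ge> 0" if "j < J" for j
      using xs(1) that unfolding t_def orthant_def by (auto intro: sum_nonneg)
    have t0: "xs j = 0" if j: "j < J" and "\<not> t j > 0" for j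
    proof -
      have "t j = 0" using tnn[OF j] that by simp
      then have "\<forall>i\<in>UNIV. xs j $ i = 0"
        using xs(1) j unfolding t_def orthant_def
        by (subst sum_nonneg_eq_0_iff[symmetric]) auto
      then show ?thesis by (simp add: vec_eq_iff)
    qed
    have finP: "finite P" unfolding P_def by simp
    have PJ: "P \<subseteq> {..<J}" unfolding P_def by auto
    have tsum: "(\<Sum>j<J. t j) = 1"
    proof -
      have "(\<Sum>j<J. t j) = (\<Sum>i\<in>UNIV. \<Sum>j<J. xs j $ i)"
        unfolding t_def by (rule sum.swap)
      also have "\<dots> = (\<Sum>i\<in>UNIV. x $ i)" using xs(2) by (auto simp flip: sum_component)
      also have "\<dots> = 1" using x(1) by (simp add: simplex_Delta_def)
      finally show ?thesis .
    qed
    have red: "(\<Sum>j\<in>P. g j) = (\<Sum>j<J. g j)" if "\<And>j. j < J \<Longrightarrow> \<not> t j > 0 \<Longrightarrow> g j = 0" for g :: "nat \<Rightarrow> 'z::comm_monoid_add"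
      by (rule sum.mono_neutral_left) (use that in \<open>auto simp: P_def\<close>)
    have tP: "(\<Sum>j\<in>P. t j) = 1"
      using tsum red[of t] tnn by force
    define q where "q j = ((1 / t j) *\<^sub>R xs j, Fs j (xs j) / t j - c)" for j
    have qin: "q j \<in> (\<Union>j<J. hyp_on simplex_Delta (Fs j))" if "j \<in> P" for j
    proof -
      have j: "j < J" "t j > 0" using that by (auto simp: P_def)
      have "(1 / t j) *\<^sub>R xs j \<in> simplex_Delta"
        using xs(1) j unfolding simplex_Delta_def orthant_def
        by (auto simp: t_def simp flip: sum_divide_distrib)
      moreover have "Fs j ((1 / t j) *\<^sub>R xs j) = Fs j (xs j) / t j"
        using assms(5)[OF j(1), of "xs j" "1 / t j"] xs(1) j by simp
      ultimately show ?thesis using j c unfolding q_def hyp_on_def by (auto intro!: bexI[of _ j])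
    qed
    have "(\<Sum>j\<in>P. t j *\<^sub>R q j) \<in> convex hull (\<Union>j<J. hyp_on simplex_Delta (Fs j))"
      by (rule convex_sum[OF finP convex_convex_hull tP]) (use qin in \<open>auto simp: P_def intro: hull_inc\<close>)
    moreover have "(\<Sum>j\<in>P. t j *\<^sub>R q j) = p"
    proof (rule prod_eqI)
      have "fst (\<Sum>j\<in>P. t j *\<^sub>R q j) = (\<Sum>j\<in>P. xs j)"
        by (simp add: fst_sum q_def P_def)
      also have "\<dots> = (\<Sum>j<J. xs j)" using red[of xs] t0 by blast
      finally show "fst (\<Sum>j\<in>P. t j *\<^sub>R q j) = fst p" using xs(2) pxy by simp
      have "snd (\<Sum>j\<in>P. t j *\<^sub>R q j) = (\<Sum>j\<in>P. Fs j (xs j) - c * t j)"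
        by (rule trans[OF snd_sum sum.cong]) (auto simp: q_def P_def algebra_simps)
      also have "\<dots> = (\<Sum>j\<in>P. Fs j (xs j)) - c" 
        by (simp add: sum_subtractf tP flip: sum_distrib_left)
      also have "(\<Sum>j\<in>P. Fs j (xs j)) = (\<Sum>j<J. Fs j (xs j))"
        using red[of "\<lambda>j. Fs j (xs j)"] t0 F0 by force
      finally show "snd (\<Sum>j\<in>P. t j *\<^sub>R q j) = snd p" using xs(3) pxy c_def by simp
    qed
    ultimately show "p \<in> convex hull (\<Union>j<J. hyp_on simplex_Delta (Fs j))" by simp
  qed
  show ?thesis unfolding F_def[symmetric]
    using sub2 hull_minimal[of _ _ convex, OF sub1 convH] by blast
qed

end
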